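(* Let $k\ge1$, $n\ge2$, $\eta\in[0,1/2)$, $p\le n^k$, and let $m$ be such that $\frac mp\ge\frac{24k}{(1-2\eta)^2}\log n$. For each $u\in[p]$ let $\mathcal H_u=\mathcal H_u^{(L)}\sqcup\mathcal H_u^{(R)}$ with $|\mathcal H_u^{(L)}|=|\mathcal H_u^{(R)}|=\frac m{2p}$, let $\xi_u(C)$, $u\in[p]$, $C\in\mathcal H_u$, be i.i.d. random variables equal to $-1$ with probability $\eta$ and $+1$ otherwise, and let $P_u\subseteq\mathcal H_u^{(L)}\times\mathcal H_u^{(R)}$ be fixed sets (independent of the $\xi$'s) with $|P_u|=(1-\varepsilon_u)\frac{m^2}{4p^2}$, $\varepsilon_u\in[0,1]$, and $\frac1p\sum_{u}\varepsilon_u\le\varepsilon$. Run the following procedure given the $P_u$ and the values $\xi_u(C)\xi_u(C')$ for $(C,C')\in P_u$: for each $u$, if $\varepsilon_u\ge1/3$ set $\mathcal A^{(1)}_u=\mathcal H_u$, $\mathcal A^{(2)}_u=\emptyset$; otherwise let $G_u$ be the graph on vertex set $\mathcal H_u$ with edge set $P_u$, let $S_u$ be (the vertex set of) a largest connected component of $G_u$, compute $z\in\{-1,1\}^{S_u}$ with $z_Cz_{C'}=\xi_u(C)\xi_u(C')$ for all edges $(C,C')$ of $G_u$ inside $S_u$ (by fixing $z$ at one vertex and propagating), replace $z$ by $-z$ if $z$ has more than $|S_u|/2$ entries equal to $-1$ (ties broken arbitrarily), and set $\mathcal A^{(1)}_u=\mathcal H_u\setminus S_u$, $\mathcal A^{(2)}_u=\{C\in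 S_u:z_C=-1\}$. Then (1) $\sum_{u\in[p]}|\mathcal A^{(1)}_u|\le4\varepsilon m$, and (2) with probability at least $1-n^{-k}$ over the $\xi$'s, for every $u\in[p]$, $\mathcal A^{(2)}_u=\{C\in\mathcal H_u:\xi_u(C)=-1\}\setminus\mathcal A^{(1)}_u$. *)

theory Defs
  imports "HOL-Probability.Probability"
begin

definition adj :: "('a \<times> 'a) set \<Rightarrow> 'a \<Rightarrow> 'a \<Rightarrow> bool" where
  "adj E x y \<longleftrightarrow> (x, y) \<in> E \<or> (y, x) \<in> E"

definition is_conn_component :: "'a set \<Rightarrow> ('a \<times> 'a) set \<Rightarrow> 'a set \<Rightarrow> bool" where
  "is_conn_component V E S \<longleftrightarrow>
     (\<exists>x\<in>V. S = {y \<in> V. (\<lambda>a b. adj E a b \<and> a \<in> V \<and> b \<in> V)\<^sup>*\<^sup>* x y})"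

definition is_largest_component :: "'a set \<Rightarrow> ('a \<times> 'a) set \<Rightarrow> 'a set \<Rightarrow> bool" where
  "is_largest_component V E S \<longleftrightarrow>
     is_conn_component V E S \<and> (\<forall>S'. is_conn_component V E S' \<longrightarrow> card S' \<le> card S)"

definition sign_labeling :: "'a set \<Rightarrow> ('a \<times> 'a) set \<Rightarrow> ('a \<Rightarrow> int) \<Rightarrow> ('a \<Rightarrow> int) \<Rightarrow> bool" where
  "sign_labeling S E xi z \<longleftrightarrow> z ` S \<subseteq> {-1, 1} \<and>
     (\<forall>C\<in>S. \<forall>C'\<in>S. (C, C') \<in> E \<longrightarrow> z C * z C' = xi C * xi C')"

definition xi_pmf :: "real \<Rightarrow> int pmf" where
  "xi_pmf \<eta> = map_pmf (\<lambda>b. if b then -1 else 1) (bernoulli_pmf \<eta>)"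

definition xi_dist :: "nat \<Rightarrow> (nat \<Rightarrow> 'a set) \<Rightarrow> real \<Rightarrow> (nat \<times> 'a \<Rightarrow> int) pmf" where
  "xi_dist p H \<eta> = Pi_pmf (SIGMA u:{1..p}. H u) 1 (\<lambda>_. xi_pmf \<eta>)"

text \<open>(A1, A2) is a possible output of the procedure (any tie-breaking) on input xi.\<close>
definition procedure_output ::
  "nat \<Rightarrow> (nat \<Rightarrow> 'a set) \<Rightarrow> (nat \<Rightarrow> ('a \<times> 'a) set) \<Rightarrow> (nat \<Rightarrow> real) \<Rightarrow>
   (nat \<times> 'a \<Rightarrow> int) \<Rightarrow> (nat \<Rightarrow> 'a set) \<Rightarrow> (nat \<Rightarrow> 'a set) \<Rightarrow> bool" where
  "procedure_output p H P eps xi A1 A2 \<longleftrightarrow>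
     (\<forall>u\<in>{1..p}.
        if eps u \<ge> 1/3 then A1 u = H u \<and> A2 u = {}
        else (\<exists>S z0 z.
                is_largest_component (H u) (P u) S \<and>
                sign_labeling S (P u) (\<lambda>C. xi (u, C)) z0 \<and>
                (z = z0 \<or> z = (\<lambda>C. - z0 C)) \<and>
                (2 * card {C \<in> S. z0 C = -1} > card S \<longrightarrow> z = (\<lambda>C. - z0 C)) \<and>
                (2 * card {C \<in> S. z0 C = -1} < card S \<longrightarrow> z = z0) \<and>
                A1 u = H u - S \<and> A2 u = {C \<in> S. z C = -1}))"

end

theory Submission
  imports Defs
begin


definition rel :: "'a set \<Rightarrow> ('a \<times> 'a) set \<Rightarrow> 'a \<Rightarrow> 'a \<Rightarrow> bool" where
  "rel V E = (\<lambda>a b. adj E a b \<and> a \<in> V \<and> b \<in> V)"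

definition gcomp :: "'a set \<Rightarrow> ('a \<times> 'a) set \<Rightarrow> 'a \<Rightarrow> 'a set" where
  "gcomp V E x = {y \<in> V. (rel V E)\<^sup>*\<^sup>* x y}"

lemma conn_comp_iff: "is_conn_component V E S \<longleftrightarrow> (\<exists>x\<in>V. S = gcomp V E x)"
  by (simp add: is_conn_component_def gcomp_def rel_def)

lemma rel_sym: "(rel V E)\<^sup>*\<^sup>* a b \<Longrightarrow> (rel V E)\<^sup>*\<^sup>* b a"
proof (induction rule: rtranclp_induct)
  case base then show ?case by simp
next
  case (step y z)
  have "rel V E z y" using step(2) by (auto simp: rel_def adj_def)
  then show ?case using step(3) by (meson converse_rtranclp_into_rtranclp)
qed

lemma comp_eq: assumes "y \<in> gcomp V E x" shows "gcomp V E y = gcomp V E x"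
proof -
  have xy: "(rel V E)\<^sup>*\<^sup>* x y" using assms by (simp add: gcomp_def)
  have yx: "(rel V E)\<^sup>*\<^sup>* y x" using rel_sym[OF xy] .
  show ?thesis unfolding gcomp_def using xy yx
    by (auto intro: rtranclp_trans)
qed

lemma comp_disj: assumes "w \<in> gcomp V E x" "w \<in> gcomp V E y"
  shows "gcomp V E x = gcomp V E y"
  using comp_eq[OF assms(1)] comp_eq[OF assms(2)] by simp

lemma comp_sub: "gcomp V E x \<subseteq> V" by (auto simp: gcomp_def)

lemma comp_self: "x \<in> V \<Longrightarrow> x \<in> gcomp V E x" by (auto simp: gcomp_def)

lemma comp_closed:
  assumes "E \<subseteq> V \<times> V" "(c, d) \<in> E"
  shows "c \<in> gcomp V E x \<longleftrightarrow> d \<in> gcomp V E x"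
proof -
  have cd: "rel V E c d" "rel V E d c" using assms by (auto simp: rel_def adj_def)
  show ?thesis using cd assms unfolding gcomp_def
    by (auto intro: rtranclp.rtrancl_into_rtrancl)
qed

lemma edges_split:
  assumes "E \<subseteq> L \<times> R"
  shows "E \<subseteq> (L \<inter> gcomp (L \<union> R) E x) \<times> (R \<inter> gcomp (L \<union> R) E x)
           \<union> (L - gcomp (L \<union> R) E x) \<times> (R - gcomp (L \<union> R) E x)" (is "_ \<subseteq> ?B")
proof
  fix e assume e: "e \<in> E"
  obtain c d where [simp]: "e = (c, d)" by fastforce
  have "E \<subseteq> (L \<union> R) \<times> (L \<union> R)" using assms by auto
  from comp_closed[OF this, of c d x] e assms show "e \<in> ?B" by auto
qed

lemma card_edges_bound:
  assumes fin: "finite L" "finite R" and E: "E \<subseteq> L \<times> R" and S: "S = gcomp (L \<union> R) E x"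
  shows "card E \<le> card (L \<inter> S) * card (R \<inter> S) + (card L - card (L \<inter> S)) * (card R - card (R \<inter> S))"
proof -
  have fE: "finite E" using fin E by (meson finite_SigmaI finite_subset)
  have "card E \<le> card ((L \<inter> S) \<times> (R \<inter> S) \<union> (L - S) \<times> (R - S))"
    using edges_split[OF E, of x] S fin by (intro card_mono) auto
  also have "\<dots> \<le> card ((L \<inter> S) \<times> (R \<inter> S)) + card ((L - S) \<times> (R - S))"
    by (rule card_Un_le)
  also have "\<dots> = card (L \<inter> S) * card (R \<inter> S) + card (L - S) * card (R - S)"
    by (simp add: card_cartesian_product)
  also have "card (L - S) = card L - card (L \<inter> S)" using fin by (simp add: card_Diff_subset_Int)
  also have "card (R - S) = card R - card (R \<inter> S)" using fin by (simp add: card_Diff_subset_Int)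
  finally show ?thesis .
qed

lemma real_edges_bound:
  assumes fin: "finite L" "finite R" and E: "E \<subseteq> L \<times> R" and S: "S = gcomp (L \<union> R) E x"
    and cL: "card L = a" and cR: "card R = a"
    and cE: "real (card E) = (1 - e) * real a ^ 2"
  shows "real a * (real a - real (card (L \<inter> S))) + real a * (real a - real (card (R \<inter> S)))
         - 2 * (real a - real (card (L \<inter> S))) * (real a - real (card (R \<inter> S))) \<le> e * real a ^ 2"
proof -
  have l: "card (L \<inter> S) \<le> a" "card (R \<inter> S) \<le> a"
    using fin cL cR card_mono[of L "L \<inter> S"] card_mono[of R "R \<inter> S"] by auto
  have h: "card E \<le> card (L \<inter> S) * card (R \<inter> S) + (a - card (L \<inter> S)) * (a - card (R \<inter> S))"
    using card_edges_bound[OF fin E S] cL cR by simp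
  have "real (card E) \<le> real (card (L \<inter> S) * card (R \<inter> S) + (a - card (L \<inter> S)) * (a - card (R \<inter> S)))"
    using h by (simp only: of_nat_le_iff)
  also have "\<dots> = real (card (L \<inter> S)) * real (card (R \<inter> S)) + (real a - real (card (L \<inter> S))) * (real a - real (card (R \<inter> S)))"
    using l by (simp only: of_nat_add of_nat_mult of_nat_diff)
  finally show ?thesis using cE by (simp add: algebra_simps power2_eq_square)
qed

lemma comp_card:
  assumes fin: "finite L" "finite R" "L \<inter> R = {}"
  shows "card (gcomp (L \<union> R) E x) = card (L \<inter> gcomp (L \<union> R) E x) + card (R \<inter> gcomp (L \<union> R) E x)" (is "_ = ?r")
proof -
  have "gcomp (L \<union> R) E x = (L \<inter> gcomp (L \<union> R) E x) \<union> (R \<inter> gcomp (L \<union> R) E x)"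
    using comp_sub[of "L \<union> R" E x] by auto
  then have "card (gcomp (L \<union> R) E x) = card ((L \<inter> gcomp (L \<union> R) E x) \<union> (R \<inter> gcomp (L \<union> R) E x))" by simp
  also have "\<dots> = ?r" using fin by (intro card_Un_disjoint) auto
  finally show ?thesis .
qed

lemma graph_main:
  fixes e :: real
  assumes fin: "finite L" "finite R" "L \<inter> R = {}" and E: "E \<subseteq> L \<times> R"
    and cL: "card L = a" and cR: "card R = a" and a: "a > 0"
    and cE: "real (card E) = (1 - e) * real a ^ 2" and e: "e < 1/3"
  shows "\<exists>S. is_largest_component (L \<union> R) E S \<and> real (card S) > real a
           \<and> real (card (L \<union> R - S)) \<le> 2 * e * real a
           \<and> (\<forall>S'. is_largest_component (L \<union> R) E S' \<longrightarrow> S' = S)"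
proof -
  define V where "V = L \<union> R"
  define N where "N v = {w. (v, w) \<in> E}" for v
  have fV: "finite V" and cV: "card V = 2 * a" using fin cL cR by (auto simp: V_def card_Un_disjoint)
  have EN: "E = Sigma L N" using E by (auto simp: N_def)
  have fN: "\<forall>v\<in>L. finite (N v)" using E fin(2) by (auto simp: N_def intro: finite_subset)
  have sumN: "real (card E) = (\<Sum>v\<in>L. real (card (N v)))"
    using EN fin(1) fN by (simp add: card_SigmaI)
  have "\<exists>v\<in>L. real (card (N v)) \<ge> (1 - e) * real a"
  proof (rule ccontr)
    assume "\<not> ?thesis"
    then have lt: "\<forall>v\<in>L. real (card (N v)) < (1 - e) * real a" by force
    have "L \<noteq> {}" using cL a by auto
    then have "(\<Sum>v\<in>L. real (card (N v))) < (\<Sum>v\<in>L. (1 - e) * real a)"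
      using lt fin(1) by (intro sum_strict_mono) auto
    also have "\<dots> = (1 - e) * real a ^ 2" using cL by (simp add: power2_eq_square)
    finally show False using sumN cE by simp
  qed
  then obtain v where v: "v \<in> L" "real (card (N v)) \<ge> (1 - e) * real a" by blast
  define C where "C = gcomp V E v"
  have NC: "N v \<subseteq> R \<inter> C"
  proof
    fix w assume "w \<in> N v"
    then have w: "(v, w) \<in> E" by (simp add: N_def)
    have "E \<subseteq> V \<times> V" using E by (auto simp: V_def)
    moreover have "v \<in> C" using v(1) by (auto simp: C_def V_def intro: comp_self)
    ultimately have "w \<in> C" using comp_closed[of E V v w v] w by (simp add: C_def)
    then show "w \<in> R \<inter> C" using w E by auto
  qed
  define x where "x = real a - real (card (L \<inter> C))"
  define y where "y = real a - real (card (R \<inter> C))"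
  have x0: "0 \<le> x" "x \<le> real a" using fin cL by (auto simp: x_def intro: card_mono)
  have y0: "0 \<le> y" using fin cR by (auto simp: y_def intro: card_mono)
  have "real (card (N v)) \<le> real (card (R \<inter> C))" using NC fin by (auto intro: card_mono)
  then have ya: "y \<le> e * real a" using v(2) by (simp add: y_def algebra_simps)
  have "e * real a \<le> (1/3) * real a" using e by (intro mult_right_mono) auto
  then have ya3: "y \<le> real a / 3" using ya by linarith
  have hC: "real a * x + real a * y - 2 * x * y \<le> e * real a ^ 2"
    using real_edges_bound[OF fin(1,2) E _ cL cR cE, of C v] by (simp add: x_def y_def C_def V_def)
  have "x * y \<le> x * (real a / 3)" using ya3 x0 by (intro mult_left_mono) auto
  then have t1: "3 * (x * y) \<le> real a * x" by (simp add: algebra_simps)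
  have t2: "0 \<le> real a * y" using y0 by simp
  have t3: "real a * x + real a * y - 2 * (x * y) \<le> e * real a ^ 2" using hC by (simp add: algebra_simps)
  have "real a * x + real a * y \<le> 3 * (e * real a ^ 2)" using t1 t2 t3 by linarith
  then have "real a * (x + y) \<le> real a * (3 * e * real a)"
    by (simp add: algebra_simps power2_eq_square)
  then have xy3: "x + y \<le> 3 * e * real a" using a by simp
  have cardC: "real (card C) = 2 * real a - x - y"
    using comp_card[OF fin, of E v] by (simp add: x_def y_def C_def V_def)
  have "(3 * e) * real a < 1 * real a" using e a by (intro mult_strict_right_mono) auto
  then have Cbig: "real (card C) > real a" using cardC xy3 by linarith
  have compC: "is_conn_component V E C" using v(1) by (auto simp: conn_comp_iff C_def V_def)
  have other: "card S' < card C" if cc: "is_conn_component V E S'" "S' \<noteq> C" for S'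
  proof -
    obtain w where w: "w \<in> V" "S' = gcomp V E w" using cc(1) by (auto simp: conn_comp_iff)
    have disj: "S' \<inter> C = {}" using comp_disj[of _ V E w v] w cc(2) by (auto simp: C_def)
    have "card S' + card C = card (S' \<union> C)" using disj fV comp_sub w
      by (intro card_Un_disjoint[symmetric]) (auto simp: C_def intro: finite_subset[OF comp_sub fV])
    also have "\<dots> \<le> card V" using fV w comp_sub[of V E] by (intro card_mono) (auto simp: C_def)
    finally show ?thesis using cV Cbig by linarith
  qed
  have largeC: "is_largest_component V E C"
    using compC other unfolding is_largest_component_def by (metis less_imp_le_nat order_refl)
  have uniq: "\<forall>S'. is_largest_component V E S' \<longrightarrow> S' = C"
  proof (intro allI impI)
    fix S' assume "is_largest_component V E S'"
    then have "is_conn_component V E S'" "card C \<le> card S'" using compC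
      by (auto simp: is_largest_component_def)
    then show "S' = C" using other by force
  qed
  have "real a * (x + y) - (x + y) ^ 2 / 2 \<le> e * real a ^ 2"
  proof -
    have "0 \<le> (x - y) ^ 2" by simp
    then have "2 * x * y \<le> (x + y) ^ 2 / 2" by (simp add: power2_eq_square algebra_simps)
    then show ?thesis using hC by (simp add: algebra_simps)
  qed
  moreover have "(x + y) * (x + y) \<le> real a * (x + y)"
    using Cbig cardC x0 y0 by (intro mult_right_mono) auto
  then have "(x + y) ^ 2 / 2 \<le> real a * (x + y) / 2" by (simp add: power2_eq_square)
  ultimately have "real a * (x + y) \<le> 2 * (e * real a ^ 2)" by linarith
  then have "real a * (x + y) \<le> real a * (2 * e * real a)" by (simp add: algebra_simps power2_eq_square)
  then have xy2: "x + y \<le> 2 * e * real a" using a by simp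
  have "card (V - C) = card V - card C" using fV comp_sub[of V E v] unfolding C_def by (meson card_Diff_subset finite_subset)
  moreover have "card C \<le> card V" using fV comp_sub[of V E v] by (intro card_mono) (auto simp: C_def)
  ultimately have "real (card (V - C)) = real (card V) - real (card C)" by (simp add: of_nat_diff)
  then have "real (card (V - C)) = x + y" using cV cardC by simp
  then have "real (card (V - C)) \<le> 2 * e * real a" using xy2 by linarith
  then show ?thesis using largeC Cbig uniq unfolding V_def by blast
qed




lemma count_binomial:
  fixes A :: "(nat \<times> 'a) set"
  assumes fA: "finite A" and sub: "{u} \<times> S \<subseteq> A" and eta: "0 \<le> \<eta>" "\<eta> \<le> 1"
  shows "map_pmf (\<lambda>xi. card {C \<in> S. xi (u, C) = -1}) (Pi_pmf A 1 (\<lambda>_. xi_pmf \<eta>))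
         = binomial_pmf (card S) \<eta>"
proof -
  define g :: "bool \<Rightarrow> int" where "g = (\<lambda>b. if b then -1 else 1)"
  define B where "B = {u} \<times> S"
  have fS: "finite S" using fA sub finite_subset[OF sub fA] by (auto dest: finite_cartesian_productD2)
  have fB: "finite B" using fA sub B_def finite_subset by auto
  have "Pi_pmf A 1 (\<lambda>_. xi_pmf \<eta>) = Pi_pmf A 1 (\<lambda>_. map_pmf g (bernoulli_pmf \<eta>))"
    by (simp add: xi_pmf_def g_def)
  also have "\<dots> = map_pmf (\<lambda>h. g \<circ> h) (Pi_pmf A False (\<lambda>_. bernoulli_pmf \<eta>))"
    using fA by (intro Pi_pmf_map) (auto simp: g_def)
  finally have eq1: "Pi_pmf A 1 (\<lambda>_. xi_pmf \<eta>) = map_pmf (\<lambda>h. g \<circ> h) (Pi_pmf A False (\<lambda>_. bernoulli_pmf \<eta>))" .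
  have cnt: "card {C \<in> S. (g \<circ> h) (u, C) = -1} = card {x \<in> B. h x}" for h
  proof -
    have "{x \<in> B. h x} = (\<lambda>C. (u, C)) ` {C \<in> S. (g \<circ> h) (u, C) = -1}"
      by (auto simp: B_def g_def)
    moreover have "inj_on (\<lambda>C. (u, C)) {C \<in> S. (g \<circ> h) (u, C) = -1}" by (auto simp: inj_on_def)
    ultimately show ?thesis by (simp add: card_image)
  qed
  have cnt2: "card {x \<in> B. (\<lambda>x. if x \<in> B then h x else False) x} = card {x \<in> B. h x}" for h
    by (rule arg_cong[where f=card]) auto
  have "map_pmf (\<lambda>xi. card {C \<in> S. xi (u, C) = -1}) (Pi_pmf A 1 (\<lambda>_. xi_pmf \<eta>))
        = map_pmf (\<lambda>h. card {x \<in> B. h x}) (Pi_pmf A False (\<lambda>_. bernoulli_pmf \<eta>))"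
    unfolding eq1 map_pmf_comp using cnt by (simp add: o_def)
  also have "\<dots> = map_pmf (\<lambda>h. card {x \<in> B. h x})
       (map_pmf (\<lambda>f x. if x \<in> B then f x else False) (Pi_pmf A False (\<lambda>_. bernoulli_pmf \<eta>)))"
    unfolding map_pmf_comp using cnt2 by simp
  also have "map_pmf (\<lambda>f x. if x \<in> B then f x else False) (Pi_pmf A False (\<lambda>_. bernoulli_pmf \<eta>))
       = Pi_pmf B False (\<lambda>_. bernoulli_pmf \<eta>)"
    using fA sub by (intro Pi_pmf_subset[symmetric]) (auto simp: B_def)
  also have "map_pmf (\<lambda>h. card {x \<in> B. h x}) (Pi_pmf B False (\<lambda>_. bernoulli_pmf \<eta>)) = binomial_pmf (card B) \<eta>"
    using fB eta by (intro binomial_pmf_altdef'[symmetric]) auto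
  also have "card B = card S" unfolding B_def by (simp add: card_cartesian_product)
  finally show ?thesis .
qed

lemma tail_bound:
  fixes A :: "(nat \<times> 'a) set"
  assumes fA: "finite A" and sub: "{u} \<times> S \<subseteq> A" and eta: "0 \<le> \<eta>" "\<eta> < 1/2" and S: "S \<noteq> {}"
  shows "measure_pmf.prob (Pi_pmf A 1 (\<lambda>_. xi_pmf \<eta>)) {xi. card S \<le> 2 * card {C \<in> S. xi (u, C) = -1}}
         \<le> exp (- real (card S) * (1 - 2 * \<eta>)^2 / 2)"
proof -
  have fS: "finite S" using finite_subset[OF sub fA] by (auto dest: finite_cartesian_productD2)
  then have n: "card S > 0" using S by auto
  define \<epsilon> where "\<epsilon> = real (card S) * (1/2 - \<eta>)"
  have e0: "\<epsilon> \<ge> 0" using eta by (simp add: \<epsilon>_def)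
  have bd: "binomial_distribution \<eta>" using eta by (simp add: binomial_distribution_def)
  have "measure_pmf.prob (Pi_pmf A 1 (\<lambda>_. xi_pmf \<eta>)) {xi. card S \<le> 2 * card {C \<in> S. xi (u, C) = -1}}
      = measure_pmf.prob (binomial_pmf (card S) \<eta>) {x. real x \<ge> real (card S) * \<eta> + \<epsilon>}"
  proof -
    have "{x. real x \<ge> real (card S) * \<eta> + \<epsilon>} = {x. card S \<le> 2 * x}"
      by (auto simp: \<epsilon>_def algebra_simps)
    moreover have "measure_pmf.prob (binomial_pmf (card S) \<eta>) {x. card S \<le> 2 * x}
      = measure_pmf.prob (map_pmf (\<lambda>xi. card {C \<in> S. xi (u, C) = -1}) (Pi_pmf A 1 (\<lambda>_. xi_pmf \<eta>))) {x. card S \<le> 2 * x}"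
      using count_binomial[OF fA sub eta(1)] eta by simp
    ultimately show ?thesis by (simp add: vimage_def)
  qed
  also have "\<dots> \<le> exp (-2 * \<epsilon>\<^sup>2 / real (card S))"
    using binomial_distribution.prob_ge[OF bd n e0] by simp
  also have "-2 * \<epsilon>\<^sup>2 / real (card S) = - real (card S) * (1 - 2 * \<eta>)^2 / 2"
    using n by (simp add: \<epsilon>_def power2_eq_square field_simps)
  finally show ?thesis .
qed




lemma sign_pm:
  assumes E: "E \<subseteq> V \<times> V" and x0: "x0 \<in> V" and S: "S = gcomp V E x0"
    and sl: "sign_labeling S E xi z" and pm: "\<forall>C\<in>S. xi C \<in> {-1, 1}"
  shows "(\<forall>C\<in>S. z C = xi C) \<or> (\<forall>C\<in>S. z C = - xi C)"
proof -
  have zpm: "\<forall>C\<in>S. z C \<in> {-1, 1}" using sl by (auto simp: sign_labeling_def)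
  have lab: "\<And>C C'. C \<in> S \<Longrightarrow> C' \<in> S \<Longrightarrow> (C, C') \<in> E \<Longrightarrow> z C * z C' = xi C * xi C'"
    using sl by (auto simp: sign_labeling_def)
  have inv: "z y * xi y = z x0 * xi x0" if "(rel V E)\<^sup>*\<^sup>* x0 y" for y
    using that
  proof (induction rule: rtranclp_induct)
    case base then show ?case by simp
  next
    case (step y w)
    have r: "adj E y w" "y \<in> V" "w \<in> V" using step(2) by (auto simp: rel_def)
    have yS: "y \<in> S" unfolding S gcomp_def using step(1) r(2) by blast
    have wS: "w \<in> S" unfolding S gcomp_def using rtranclp.rtrancl_into_rtrancl[OF step(1) step(2)] r(3) by blast
    have eq: "z y * z w = xi y * xi w"
    proof -
      have "(y, w) \<in> E \<or> (w, y) \<in> E" using r(1) by (simp add: adj_def)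
      then show ?thesis
      proof
        assume "(y, w) \<in> E" then show ?thesis using lab[OF yS wS] by blast
      next
        assume "(w, y) \<in> E" then have "z w * z y = xi w * xi y" using lab[OF wS yS] by blast
        then show ?thesis by (metis mult.commute)
      qed
    qed
    have v: "z y = -1 \<or> z y = 1" "z w = -1 \<or> z w = 1" "xi y = -1 \<or> xi y = 1" "xi w = -1 \<or> xi w = 1"
      using zpm pm yS wS by auto
    have "z w * xi w = z y * xi y"
      using eq v by (elim disjE) simp_all
    then show ?case using step(3) by simp
  qed
  have x0S: "x0 \<in> S" using x0 S comp_self by auto
  have "\<forall>C\<in>S. z C * xi C = z x0 * xi x0" using inv unfolding S gcomp_def by blast
  then have c: "\<forall>C\<in>S. z C * xi C = z x0 * xi x0" .
  have v0: "z x0 = -1 \<or> z x0 = 1" "xi x0 = -1 \<or> xi x0 = 1" using zpm pm x0S by auto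
  have "z C = xi C" if "C \<in> S" "z x0 * xi x0 = 1" for C
  proof -
    have p: "z C * xi C = 1" using c that by simp
    have "z C = -1 \<or> z C = 1" "xi C = -1 \<or> xi C = 1" using zpm pm that(1) by auto
    then show ?thesis using p by (elim disjE) simp_all
  qed
  moreover have "z C = - xi C" if "C \<in> S" "z x0 * xi x0 = -1" for C
  proof -
    have p: "z C * xi C = -1" using c that by simp
    have "z C = -1 \<or> z C = 1" "xi C = -1 \<or> xi C = 1" using zpm pm that(1) by auto
    then show ?thesis using p by (elim disjE) simp_all
  qed
  moreover have "z x0 * xi x0 = 1 \<or> z x0 * xi x0 = -1" using v0 by (elim disjE) auto
  ultimately show ?thesis by blast
qed




theorem mainTheorem13:
  fixes k n p m :: nat and \<eta> \<epsilon> :: real and eps :: "nat \<Rightarrow> real"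
    and L R :: "nat \<Rightarrow> 'a set" and P :: "nat \<Rightarrow> ('a \<times> 'a) set"
  assumes "k \<ge> 1" and "n \<ge> 2" and "0 \<le> \<eta>" and "\<eta> < 1/2"
    and "1 \<le> p" and "p \<le> n ^ k"
    and "real m / real p \<ge> 24 * real k / (1 - 2 * \<eta>)^2 * ln (real n)"
    and "\<forall>u\<in>{1..p}. finite (L u) \<and> finite (R u) \<and> L u \<inter> R u = {} \<and>
           real (card (L u)) = real m / (2 * real p) \<and> real (card (R u)) = real m / (2 * real p)"
    and "\<forall>u\<in>{1..p}. P u \<subseteq> L u \<times> R u \<and> 0 \<le> eps u \<and> eps u \<le> 1 \<and>
           real (card (P u)) = (1 - eps u) * real m ^ 2 / (4 * real p ^ 2)"
    and "(1 / real p) * (\<Sum>u\<in>{1..p}. eps u) \<le> \<epsilon>"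
  shows "(\<forall>xi A1 A2. procedure_output p (\<lambda>u. L u \<union> R u) P eps xi A1 A2 \<longrightarrow>
            (\<Sum>u\<in>{1..p}. real (card (A1 u))) \<le> 4 * \<epsilon> * real m)
       \<and> measure_pmf.prob (xi_dist p (\<lambda>u. L u \<union> R u) \<eta>)
           {xi. \<forall>A1 A2. procedure_output p (\<lambda>u. L u \<union> R u) P eps xi A1 A2 \<longrightarrow>
                  (\<forall>u\<in>{1..p}. A2 u = {C \<in> L u \<union> R u. xi (u, C) = -1} - A1 u)}
         \<ge> 1 - 1 / real n ^ k"
proof -
  define H where "H = (\<lambda>u. L u \<union> R u)"
  define ar where "ar = real m / (2 * real p)"
  define d where "d = (1 - 2 * \<eta>)^2"
  have p0: "real p > 0" using assms(5) by simp
  have n1: "ln (real n) > 0" using assms(2) by simp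
  have d0: "d > 0" using assms(4) by (simp add: d_def)
  have "24 * real k / d * ln (real n) > 0" using assms(1) d0 n1 by simp
  then have mp0: "real m / real p > 0" using assms(7) by (simp add: d_def)
  then have ar0: "ar > 0" by (simp add: ar_def)
  have "24 * real k / d * ln (real n) * d \<le> real m / real p * d"
    using assms(7) d0 by (intro mult_right_mono) (auto simp: d_def)
  then have "24 * real k * ln (real n) \<le> 2 * ar * d" using d0 by (simp add: ar_def)
  then have key: "12 * real k * ln (real n) \<le> ar * d" by simp
  have ar2: "real m ^ 2 / (4 * real p ^ 2) = ar ^ 2" by (simp add: ar_def power_divide power_mult_distrib)
  have cards: "finite (L u) \<and> finite (R u) \<and> L u \<inter> R u = {} \<and> real (card (L u)) = ar
     \<and> card (R u) = card (L u) \<and> P u \<subseteq> L u \<times> R u \<and> 0 \<le> eps u \<and> eps u \<le> 1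
     \<and> real (card (P u)) = (1 - eps u) * real (card (L u)) ^ 2" if "u \<in> {1..p}" for u
  proof -
    have h8: "finite (L u)" "finite (R u)" "L u \<inter> R u = {}" "real (card (L u)) = ar" "real (card (R u)) = ar"
      using assms(8) that by (auto simp: ar_def)
    have h9: "P u \<subseteq> L u \<times> R u" "0 \<le> eps u" "eps u \<le> 1"
      "real (card (P u)) = (1 - eps u) * real m ^ 2 / (4 * real p ^ 2)"
      using assms(9) that by auto
    have "card (R u) = card (L u)" using h8(4,5) by (metis of_nat_eq_iff)
    moreover have "real (card (P u)) = (1 - eps u) * real (card (L u)) ^ 2"
      using h9(4) ar2 h8(4) by (metis times_divide_eq_right)
    ultimately show ?thesis using h8 h9 by blast
  qed
  have gm: "\<exists>S. is_largest_component (H u) (P u) S \<and> real (card S) > ar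
           \<and> real (card (H u - S)) \<le> 2 * eps u * ar
           \<and> (\<forall>S'. is_largest_component (H u) (P u) S' \<longrightarrow> S' = S)"
    if "u \<in> {1..p}" "eps u < 1/3" for u
  proof -
    have c: "finite (L u)" "finite (R u)" "L u \<inter> R u = {}" "real (card (L u)) = ar"
      "card (R u) = card (L u)" "P u \<subseteq> L u \<times> R u"
      "real (card (P u)) = (1 - eps u) * real (card (L u)) ^ 2" using cards[OF that(1)] by blast+
    have "card (L u) > 0" using c(4) ar0 by auto
    from graph_main[OF c(1,2,3,6) refl c(5) this c(7) that(2)] show ?thesis
      using c(4) by (simp add: H_def)
  qed
  have part1: "(\<Sum>u\<in>{1..p}. real (card (A1 u))) \<le> 4 * \<epsilon> * real m"
    if po: "procedure_output p H P eps xi A1 A2" for xi A1 A2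
  proof -
    have each: "real (card (A1 u)) \<le> 8 * eps u * ar" if u: "u \<in> {1..p}" for u
    proof (cases "eps u \<ge> 1/3")
      case True
      note pu = bspec[OF po[unfolded procedure_output_def] u]
      have "A1 u = H u" using pu[unfolded if_P[OF True]] by blast
      moreover have "real (card (H u)) = 2 * ar" using cards[OF u]
        by (simp add: H_def card_Un_disjoint)
      moreover have "2 * ar \<le> 8 * eps u * ar" using True ar0 by simp
      ultimately show ?thesis by simp
    next
      case False
      note pu = bspec[OF po[unfolded procedure_output_def] u]
      note ex = pu[unfolded if_not_P[OF False]]
      from ex obtain S z0 z where S: "is_largest_component (H u) (P u) S" "A1 u = H u - S"
        by (elim exE conjE)
      have lt: "eps u < 1/3" using False by simp
      obtain S0 where S0: "is_largest_component (H u) (P u) S0"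
          "real (card (H u - S0)) \<le> 2 * eps u * ar"
          "\<forall>S'. is_largest_component (H u) (P u) S' \<longrightarrow> S' = S0"
        using gm[OF u lt] by blast
      have "S = S0" using S0(3) S(1) by blast
      moreover have "2 * eps u * ar \<le> 8 * eps u * ar" using cards[OF u] ar0 by simp
      ultimately show ?thesis using S0(2) S(2) by simp
    qed
    have "(\<Sum>u\<in>{1..p}. real (card (A1 u))) \<le> (\<Sum>u\<in>{1..p}. 8 * ar * eps u)"
      using each by (intro sum_mono) (simp add: algebra_simps)
    also have "\<dots> = 8 * ar * (\<Sum>u\<in>{1..p}. eps u)" by (simp add: sum_distrib_left)
    also have "(\<Sum>u\<in>{1..p}. eps u) \<le> real p * \<epsilon>"
      using assms(10) p0 by (simp add: divide_le_eq mult.commute)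
    then have "8 * ar * (\<Sum>u\<in>{1..p}. eps u) \<le> 8 * ar * (real p * \<epsilon>)"
      using ar0 by (intro mult_left_mono) auto
    also have "8 * ar * (real p * \<epsilon>) = 4 * \<epsilon> * real m" using p0 by (simp add: ar_def)
    finally show ?thesis .
  qed
  define M where "M = xi_dist p H \<eta>"
  define A where "A = (SIGMA u:{1..p}. H u)"
  have fH: "finite (H u)" if "u \<in> {1..p}" for u using cards[OF that] by (simp add: H_def)
  have fA: "finite A" unfolding A_def using fH by (intro finite_SigmaI) auto
  have MA: "M = Pi_pmf A 1 (\<lambda>_. xi_pmf \<eta>)" by (simp add: M_def xi_dist_def A_def)
  define U where "U = {u\<in>{1..p}. eps u < 1/3}"
  define Su where "Su u = (THE S. is_largest_component (H u) (P u) S)" for u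
  have Su: "is_largest_component (H u) (P u) (Su u) \<and> real (card (Su u)) > ar
           \<and> (\<forall>S'. is_largest_component (H u) (P u) S' \<longrightarrow> S' = Su u)" if uU: "u \<in> U" for u
  proof -
    obtain S0 where S0: "is_largest_component (H u) (P u) S0" "real (card S0) > ar"
          "\<forall>S'. is_largest_component (H u) (P u) S' \<longrightarrow> S' = S0"
    proof -
      have "u \<in> {1..p}" "eps u < 1/3" using uU by (auto simp: U_def)
      from gm[OF this] show ?thesis using that by blast
    qed
    have "Su u = S0" unfolding Su_def using S0(1,3) by (intro the_equality) blast+
    then show ?thesis using S0 by blast
  qed
  have Su1: "is_largest_component (H u) (P u) (Su u)" if "u \<in> U" for u
    using Su[OF that] by (rule conjunct1)
  have Su2: "real (card (Su u)) > ar" if "u \<in> U" for u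
    using Su[OF that] by (elim conjE)
  have Su3: "S' = Su u" if "u \<in> U" "is_largest_component (H u) (P u) S'" for u S'
  proof -
    have "\<forall>S'. is_largest_component (H u) (P u) S' \<longrightarrow> S' = Su u" using Su[OF that(1)] by (elim conjE)
    then have "is_largest_component (H u) (P u) S' \<longrightarrow> S' = Su u" by (rule spec)
    then show ?thesis using that(2) by (rule mp)
  qed
  have SuH: "Su u \<subseteq> H u" if "u \<in> U" for u
  proof -
    have "is_largest_component (H u) (P u) (Su u)" using Su[OF that] by (rule conjunct1)
    then have "is_conn_component (H u) (P u) (Su u)" unfolding is_largest_component_def by blast
    then obtain x where "Su u = gcomp (H u) (P u) x" unfolding conn_comp_iff by blast
    then show ?thesis using comp_sub[of "H u" "P u" x] by simp
  qed
  define bad where "bad u = {xi :: nat \<times> 'a \<Rightarrow> int. card (Su u) \<le> 2 * card {C \<in> Su u. xi (u, C) = -1}}" for u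
  define T where "T = {xi. \<forall>A1 A2. procedure_output p H P eps xi A1 A2 \<longrightarrow>
                  (\<forall>u\<in>{1..p}. A2 u = {C \<in> H u. xi (u, C) = -1} - A1 u)}"
  have pm: "xi (u, C) \<in> {-1, 1}" if "xi \<in> set_pmf M" "u \<in> {1..p}" "C \<in> H u" for xi u C
  proof -
    have "xi (u, C) \<in> set_pmf (xi_pmf \<eta>)"
      using that set_Pi_pmf[OF fA, of 1 "\<lambda>_. xi_pmf \<eta>"] by (auto simp: MA A_def PiE_dflt_def)
    then show ?thesis by (auto simp: xi_pmf_def)
  qed
  have good: "xi \<in> T" if xiM: "xi \<in> set_pmf M" and nb: "\<forall>u\<in>U. xi \<notin> bad u" for xi
    unfolding T_def
  proof (intro CollectI allI impI ballI)
    fix A1 A2 u assume po: "procedure_output p H P eps xi A1 A2" and u: "u \<in> {1..p}"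
    show "A2 u = {C \<in> H u. xi (u, C) = -1} - A1 u"
    proof (cases "eps u \<ge> 1/3")
      case True
      note pu = bspec[OF po[unfolded procedure_output_def] u]
      have "A1 u = H u" "A2 u = {}" using pu[unfolded if_P[OF True]] by blast+
      then show ?thesis by simp
    next
      case False
      then have uU: "u \<in> U" using u by (simp add: U_def)
      note pu = bspec[OF po[unfolded procedure_output_def] u]
      note ex = pu[unfolded if_not_P[OF False]]
      from ex obtain S z0 z where S: "is_largest_component (H u) (P u) S"
        "sign_labeling S (P u) (\<lambda>C. xi (u, C)) z0" "z = z0 \<or> z = (\<lambda>C. - z0 C)"
        "2 * card {C \<in> S. z0 C = -1} > card S \<longrightarrow> z = (\<lambda>C. - z0 C)"
        "2 * card {C \<in> S. z0 C = -1} < card S \<longrightarrow> z = z0"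
        "A1 u = H u - S" "A2 u = {C \<in> S. z C = -1}"
        by blast
      have SS: "S = Su u" by (rule Su3[OF uU S(1)])
      have SH: "S \<subseteq> H u" using SuH[OF uU] SS by simp
      have fS: "finite S" using SH cards[OF u] by (auto simp: H_def intro: finite_subset)
      obtain x0 where x0: "x0 \<in> H u" "S = gcomp (H u) (P u) x0"
        using S(1) by (auto simp: is_largest_component_def conn_comp_iff)
      have PH: "P u \<subseteq> H u \<times> H u" using cards[OF u] by (auto simp: H_def)
      have pmS: "\<forall>C\<in>S. xi (u, C) \<in> {-1, 1}" using pm[OF xiM u] SH by auto
      define B where "B = {C \<in> S. xi (u, C) = -1}"
      have nbu: "2 * card B < card S" using nb uU SS by (auto simp: bad_def B_def)
      have rhs: "{C \<in> H u. xi (u, C) = -1} - A1 u = B" using S(6) SH by (auto simp: B_def)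
      from sign_pm[OF PH x0(1) x0(2) S(2) pmS]
      show ?thesis
      proof
        assume h: "\<forall>C\<in>S. z0 C = xi (u, C)"
        then have "{C \<in> S. z0 C = -1} = B" by (auto simp: B_def)
        then have "z = z0" using S(5) nbu by simp
        then show ?thesis using S(7) rhs h by (auto simp: B_def)
      next
        assume h: "\<forall>C\<in>S. z0 C = - xi (u, C)"
        then have "{C \<in> S. z0 C = -1} = S - B" using pmS by (auto simp: B_def)
        moreover have "card (S - B) = card S - card B" using fS by (simp add: B_def card_Diff_subset)
        moreover have "card B \<le> card S" using fS by (simp add: B_def card_mono)
        ultimately have "2 * card {C \<in> S. z0 C = -1} > card S" using nbu by simp
        then have "z = (\<lambda>C. - z0 C)" using S(4) by simp
        then show ?thesis using S(7) rhs h by (auto simp: B_def)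
      qed
    qed
  qed
  have "UNIV - T \<subseteq> (\<Union>u\<in>U. bad u) \<union> (UNIV - set_pmf M)" using good by blast
  then have "measure_pmf.prob M (UNIV - T) \<le> measure_pmf.prob M ((\<Union>u\<in>U. bad u) \<union> (UNIV - set_pmf M))"
    by (intro measure_pmf.finite_measure_mono) auto
  also have "\<dots> \<le> measure_pmf.prob M (\<Union>u\<in>U. bad u) + measure_pmf.prob M (UNIV - set_pmf M)"
    by (intro measure_subadditive) (auto simp: measure_pmf.emeasure_eq_measure)
  also have "measure_pmf.prob M (UNIV - set_pmf M) = 0" by (simp add: measure_pmf_zero_iff)
  also have "measure_pmf.prob M (\<Union>u\<in>U. bad u) \<le> (\<Sum>u\<in>U. measure_pmf.prob M (bad u))"
    by (intro measure_pmf.finite_measure_subadditive_finite) (auto simp: U_def)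
  also have "\<dots> \<le> (\<Sum>u\<in>U. 1 / real n ^ (2 * k))"
  proof (intro sum_mono)
    fix u assume uU: "u \<in> U"
    have u: "u \<in> {1..p}" using uU by (simp add: U_def)
    have sub: "{u} \<times> Su u \<subseteq> A" using SuH[OF uU] u by (auto simp: A_def)
    have ne: "Su u \<noteq> {}" using Su2[OF uU] ar0 by (intro notI) simp
    have "measure_pmf.prob M (bad u) \<le> exp (- real (card (Su u)) * (1 - 2 * \<eta>)^2 / 2)"
      unfolding MA bad_def by (rule tail_bound[OF fA sub assms(3,4) ne])
    also have "- real (card (Su u)) * (1 - 2 * \<eta>)^2 / 2 \<le> - (real (2 * k) * ln (real n))"
    proof -
      have "ar * d \<le> real (card (Su u)) * d" using Su2[OF uU] d0 by (intro mult_right_mono) auto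
      moreover have "0 \<le> real k * ln (real n)" using n1 by simp
      ultimately show ?thesis using key by (simp add: d_def)
    qed
    then have "exp (- real (card (Su u)) * (1 - 2 * \<eta>)^2 / 2) \<le> exp (- (real (2 * k) * ln (real n)))"
      by simp
    also have "\<dots> = 1 / real n ^ (2 * k)"
    proof -
      have ex: "exp (real (2 * k) * ln (real n)) = real n ^ (2 * k)"
        using assms(2) by (subst exp_of_nat_mult) simp
      show ?thesis by (simp only: exp_minus ex inverse_eq_divide)
    qed
    finally show "measure_pmf.prob M (bad u) \<le> 1 / real n ^ (2 * k)" .
  qed
  also have "\<dots> = real (card U) / real n ^ (2 * k)" by simp
  also have "\<dots> \<le> real (n ^ k) / real n ^ (2 * k)"
  proof -
    have "card U \<le> card {1..p}" by (intro card_mono) (auto simp: U_def)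
    then have "card U \<le> n ^ k" using assms(6) by simp
    then show ?thesis using assms(2) by (intro divide_right_mono) auto
  qed
  also have "\<dots> = 1 / real n ^ k" using assms(2) by (simp add: power_mult mult_2 power_add)
  finally have pc: "measure_pmf.prob M (UNIV - T) \<le> 1 / real n ^ k" by simp
  have "measure_pmf.prob M T = 1 - measure_pmf.prob M (UNIV - T)"
    using measure_pmf.prob_compl[of T M] by simp
  then have part2: "measure_pmf.prob M T \<ge> 1 - 1 / real n ^ k" using pc by simp
  show ?thesis using part1 part2 unfolding M_def T_def H_def by blast
qed


end
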